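(* Let $G=(V,E)$ be a finite undirected graph with $|V|=n$, and let $G^{\ell}$ be the directed graph on $V$ obtained by replacing every edge $\{u,v\}\in E$ by the two arcs $u\to v$ and $v\to u$. Then for every linear ordering $\varphi$ of $V$, $$\mathrm{VS}(G,\varphi)\le \mathrm{RB}(G^{\ell},\varphi)\le \mathrm{VS}(G,\varphi)+1 .$$
   Context: A linear ordering of a finite vertex set $V$ with $|V|=n$ is a bijection $\varphi:\{1,\dots,n\}\to V$; write $\mathrm{pos}(u)=\varphi^{-1}(u)$. For an undirected graph $G=(V,E)$, the vertex separation value is $\mathrm{VS}(G,\varphi)=\max_{1\le i\le n}\left|\{u\in V:\exists\{u,v\}\in E \text{ with } \mathrm{pos}(u)\le i<\mathrm{pos}(v)\}\right|$. For a directed graph $D=(V,A)$ (a labeled dependency graph; an arc $u\to w$ means object $u$ depends on object $w$, i.e. $w$ must leave its start pose before $u$ can be placed at its goal), the running buffer count of $\varphi$ is defined by the following process: objects are picked in the order $\varphi(1),\varphi(2),\dots$; let $S_i=\{\varphi(1),\dots,\varphi(i)\}$ ($S_0=\emptyset$) and $B_i=\{u\in S_i:\exists\, (u\to w)\in A \text{ with } w\notin S_i\}$ (objects stored in an external buffer after step $i$, all others in $S_i$ having been placed at their goals at the earliest opportunity). Then $\mathrm{RB}(D,\varphi)=\max_{1\le i\le n}\big(|B_{i-1}|+[\varphi(i)\in B_i]\big)$, where $[\cdot]$ is $1$ if the condition holds and $0$ otherwise (when $\varphi(i)$ must itself go to the buffer, it is stored there before the objects it releases can leave the buffer). *)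

theory Defs
  imports Main
begin

definition ugraph :: "'a set \<Rightarrow> 'a set set \<Rightarrow> bool" where
  "ugraph V E \<longleftrightarrow> finite V \<and> (\<forall>e\<in>E. e \<subseteq> V \<and> card e = 2)"

definition linear_ordering :: "'a set \<Rightarrow> (nat \<Rightarrow> 'a) \<Rightarrow> bool" where
  "linear_ordering V \<phi> \<longleftrightarrow> bij_betw \<phi> {1..card V} V"

definition pos :: "'a set \<Rightarrow> (nat \<Rightarrow> 'a) \<Rightarrow> 'a \<Rightarrow> nat" where
  "pos V \<phi> u = inv_into {1..card V} \<phi> u"

definition VS :: "'a set \<Rightarrow> 'a set set \<Rightarrow> (nat \<Rightarrow> 'a) \<Rightarrow> nat" where
  "VS V E \<phi> = Max ((\<lambda>i. card {u \<in> V. \<exists>v. {u, v} \<in> E \<and> pos V \<phi> u \<le> i \<and> i < pos V \<phi> v})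
                    ` {1..card V})"

definition S_set :: "(nat \<Rightarrow> 'a) \<Rightarrow> nat \<Rightarrow> 'a set" where
  "S_set \<phi> i = \<phi> ` {1..i}"

definition B_set :: "('a \<times> 'a) set \<Rightarrow> (nat \<Rightarrow> 'a) \<Rightarrow> nat \<Rightarrow> 'a set" where
  "B_set A \<phi> i = {u \<in> S_set \<phi> i. \<exists>w. (u, w) \<in> A \<and> w \<notin> S_set \<phi> i}"

definition RB :: "'a set \<Rightarrow> ('a \<times> 'a) set \<Rightarrow> (nat \<Rightarrow> 'a) \<Rightarrow> nat" where
  "RB V A \<phi> = Max ((\<lambda>i. card (B_set A \<phi> (i - 1)) + (if \<phi> i \<in> B_set A \<phi> i then 1 else 0))
                    ` {1..card V})"

definition bidirect :: "'a set set \<Rightarrow> ('a \<times> 'a) set" where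
  "bidirect E = {(u, v). {u, v} \<in> E}"

end

theory Submission
  imports Defs
begin

lemma pos_props:
  assumes "linear_ordering V \<phi>"
  shows "u \<in> V \<Longrightarrow> pos V \<phi> u \<in> {1..card V} \<and> \<phi> (pos V \<phi> u) = u"
    and "k \<in> {1..card V} \<Longrightarrow> pos V \<phi> (\<phi> k) = k"
proof -
  show "u \<in> V \<Longrightarrow> pos V \<phi> u \<in> {1..card V} \<and> \<phi> (pos V \<phi> u) = u"
    using assms unfolding linear_ordering_def pos_def bij_betw_def
    by (metis f_inv_into_f inv_into_into)
  show "k \<in> {1..card V} \<Longrightarrow> pos V \<phi> (\<phi> k) = k"
    using assms unfolding linear_ordering_def pos_def bij_betw_def
    by (simp add: inv_into_f_f)
qed

lemma S_mem:
  assumes "linear_ordering V \<phi>" "i \<le> card V"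
  shows "x \<in> S_set \<phi> i \<longleftrightarrow> x \<in> V \<and> pos V \<phi> x \<le> i"
proof
  assume "x \<in> S_set \<phi> i"
  then obtain k where k: "k \<in> {1..i}" "x = \<phi> k" by (auto simp: S_set_def)
  then have "k \<in> {1..card V}" using assms(2) by auto
  then show "x \<in> V \<and> pos V \<phi> x \<le> i"
    using pos_props(2)[OF assms(1)] assms(1) k unfolding linear_ordering_def bij_betw_def by auto
next
  assume "x \<in> V \<and> pos V \<phi> x \<le> i"
  then show "x \<in> S_set \<phi> i" using pos_props(1)[OF assms(1), of x] unfolding S_set_def
    by (metis atLeastAtMost_iff image_eqI)
qed

lemma B_eq:
  assumes "ugraph V E" "linear_ordering V \<phi>" "i \<le> card V"
  shows "B_set (bidirect E) \<phi> i = {u \<in> V. \<exists>v. {u, v} \<in> E \<and> pos V \<phi> u \<le> i \<and> i < pos V \<phi> v}"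
proof -
  have inV: "{u, v} \<in> E \<Longrightarrow> u \<in> V \<and> v \<in> V" for u v using assms(1) unfolding ugraph_def by auto
  show ?thesis unfolding B_set_def bidirect_def
    using S_mem[OF assms(2,3)] inV by (auto simp: not_le)
qed

lemma B_fin: "finite (B_set A \<phi> i)"
  unfolding B_set_def S_set_def by auto

lemma B_zero: "B_set A \<phi> 0 = {}"
  unfolding B_set_def S_set_def by auto

lemma B_step:
  assumes "i \<ge> 1"
  shows "card (B_set A \<phi> i) \<le> card (B_set A \<phi> (i - 1)) + (if \<phi> i \<in> B_set A \<phi> i then 1 else 0)"
proof -
  have S: "S_set \<phi> i = insert (\<phi> i) (S_set \<phi> (i - 1))"
  proof -
    have "{1..i} = insert i {1..i - 1}" using assms by auto
    then show ?thesis unfolding S_set_def by simp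
  qed
  have sub: "B_set A \<phi> i \<subseteq> B_set A \<phi> (i - 1) \<union> (B_set A \<phi> i \<inter> {\<phi> i})"
    unfolding B_set_def S by auto
  have "card (B_set A \<phi> i) \<le> card (B_set A \<phi> (i - 1) \<union> (B_set A \<phi> i \<inter> {\<phi> i}))"
    by (rule card_mono[OF _ sub]) (simp add: B_fin)
  also have "\<dots> \<le> card (B_set A \<phi> (i - 1)) + card (B_set A \<phi> i \<inter> {\<phi> i})"
    by (rule card_Un_le)
  also have "card (B_set A \<phi> i \<inter> {\<phi> i}) = (if \<phi> i \<in> B_set A \<phi> i then 1 else 0)"
    by auto
  finally show ?thesis .
qed

theorem lemma1:
  fixes V :: "'a set" and E :: "'a set set" and \<phi> :: "nat \<Rightarrow> 'a"
  assumes "ugraph V E"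
    and "linear_ordering V \<phi>"
  shows "VS V E \<phi> \<le> RB V (bidirect E) \<phi> \<and> RB V (bidirect E) \<phi> \<le> VS V E \<phi> + 1"
proof (cases "card V = 0")
  case True
  then show ?thesis unfolding VS_def RB_def by simp
next
  case False
  define f where "f i = card {u \<in> V. \<exists>v. {u, v} \<in> E \<and> pos V \<phi> u \<le> i \<and> i < pos V \<phi> v}" for i
  define g where "g i = card (B_set (bidirect E) \<phi> (i - 1)) + (if \<phi> i \<in> B_set (bidirect E) \<phi> i then 1 else 0)" for i
  have VS: "VS V E \<phi> = Max (f ` {1..card V})" unfolding VS_def f_def by simp
  have RB: "RB V (bidirect E) \<phi> = Max (g ` {1..card V})" unfolding RB_def g_def by simp
  have ne: "{1..card V} \<noteq> {}" using False by auto
  have fB: "i \<le> card V \<Longrightarrow> f i = card (B_set (bidirect E) \<phi> i)" for i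
    unfolding f_def using B_eq[OF assms] by simp
  have fg: "i \<in> {1..card V} \<Longrightarrow> f i \<le> g i" for i
    using fB[of i] B_step[of i "bidirect E" \<phi>] unfolding g_def by auto
  have fle: "i \<in> {1..card V} \<Longrightarrow> f i \<le> VS V E \<phi>" for i
    unfolding VS by (rule Max_ge) auto
  have gle: "i \<in> {1..card V} \<Longrightarrow> g i \<le> RB V (bidirect E) \<phi>" for i
    unfolding RB by (rule Max_ge) auto
  have g2: "i \<in> {1..card V} \<Longrightarrow> g i \<le> VS V E \<phi> + 1" for i
  proof -
    assume i: "i \<in> {1..card V}"
    have "card (B_set (bidirect E) \<phi> (i - 1)) \<le> VS V E \<phi>"
    proof (cases "i = 1")
      case True then show ?thesis by (simp add: B_zero)
    next
      case False
      then have "i - 1 \<in> {1..card V}" using i by auto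
      then show ?thesis using fB[of "i - 1"] fle[of "i - 1"] by auto
    qed
    then show ?thesis unfolding g_def by auto
  qed
  have 1: "VS V E \<phi> \<le> RB V (bidirect E) \<phi>"
    unfolding VS using ne fg gle by (auto simp: Max_le_iff intro: le_trans[OF fg gle])
  have 2: "RB V (bidirect E) \<phi> \<le> VS V E \<phi> + 1"
    unfolding RB using ne g2 by (auto simp: Max_le_iff)
  show ?thesis using 1 2 by simp
qed

end
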